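(* Let $\alpha$ be a nonzero real number and let $\gamma(t)=\Psi(u(t),v(t))$, $t\in[a,b]$, be a regular curve in $\mathbb H^2$ not passing through $N$. Then $\gamma$ is an $\alpha$-stationary curve if and only if $$\kappa=-\alpha\,\frac{v'\sinh u}{u\,|\gamma'|_\epsilon}.$$
   Context: Let $\langle x,y\rangle_\epsilon=x_1y_1+x_2y_2-x_3y_3$ be the Lorentzian inner product on $\mathbb R^3$ and $|x|_\epsilon=\sqrt{|\langle x,x\rangle_\epsilon|}$. The hyperbolic plane is $\mathbb H^2=\{(x,y,z):x^2+y^2-z^2=-1,\ z>0\}$ with the induced metric. It is parametrized by $\Psi(u,v)=(\sinh u\cos v,\sinh u\sin v,\cosh u)$. Let $N=(0,0,1)$. The hyperbolic distance from $\Psi(u,v)$ ($u\ge 0$) to $N$ is $u$. For a regular curve $\gamma(t)=\Psi(u(t),v(t))$ with $u>0$, we have $|\gamma'|_\epsilon=\sqrt{u'^2+\sinh^2(u)v'^2}$. Its unit normal is $$\mathbf n=\frac{1}{|\gamma'|_\epsilon}\big(u'\sin v+\sinh u\cosh u\,v'\cos v,\ \sinh u\cosh u\,v'\sin v-u'\cos v,\ \sinh^2(u)\,v'\big).$$ Its curvature is $$\kappa=\frac{\langle\gamma'',\mathbf n\rangle_\epsilon}{|\gamma'|_\epsilon^2}=\frac{v'\cosh u\,(2u'^2+v'^2\sinh^2u)+\sinh u\,(u'v''-u''v')}{|\gamma'|_\epsilon^3}.$$ For $\alpha\in\mathbb R$, the energy of $\gamma$ is $$E_\alpha[\gamma]=\int_\gamma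 \mathsf d^\alpha\,ds=\int_a^b u^\alpha\sqrt{u'^2+\sinh^2(u)v'^2}\,dt,$$ where $\mathsf d$ is the hyperbolic distance to $N$. A curve is called $\alpha$-stationary if it is a critical point of $E_\alpha$, i.e. $(u,v)$ satisfies the Euler–Lagrange equations of this functional. Throughout the paper, $\alpha\neq0$ and curves are assumed not to pass through $N$. *)

theory Defs
  imports "HOL-Analysis.Analysis"
begin

text \<open>Curve gamma(t) = Psi(u t, v t) in the hyperbolic plane, described through the
coordinate functions u, v and their first and second derivatives.\<close>

definition lspeed :: "real \<Rightarrow> real \<Rightarrow> real \<Rightarrow> real" where
  "lspeed x p q = sqrt (p\<^sup>2 + (sinh x)\<^sup>2 * q\<^sup>2)"

definition hcurv :: "real \<Rightarrow> real \<Rightarrow> real \<Rightarrow> real \<Rightarrow> real \<Rightarrow> real" where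
  "hcurv x p pp q qq =
     (q * cosh x * (2 * p\<^sup>2 + q\<^sup>2 * (sinh x)\<^sup>2) + sinh x * (p * qq - pp * q))
       / (lspeed x p q) ^ 3"

definition lagr :: "real \<Rightarrow> real \<Rightarrow> real \<Rightarrow> real \<Rightarrow> real \<Rightarrow> real" where
  "lagr \<alpha> x y p q = x powr \<alpha> * lspeed x p q"

text \<open>alpha-stationary: (u,v) satisfies the Euler--Lagrange equations of E_alpha on [a,b],
  i.e. d/dt (dL/du') = dL/du and d/dt (dL/dv') = dL/dv.
  Here u' and v' are the (given) derivatives of u and v.\<close>
definition alpha_stationary ::
  "real \<Rightarrow> (real \<Rightarrow> real) \<Rightarrow> (real \<Rightarrow> real) \<Rightarrow> (real \<Rightarrow> real) \<Rightarrow> (real \<Rightarrow> real)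
     \<Rightarrow> real \<Rightarrow> real \<Rightarrow> bool" where
  "alpha_stationary \<alpha> u v u' v' a b \<longleftrightarrow>
     (\<forall>t\<in>{a..b}.
        ((\<lambda>s. deriv (\<lambda>p. lagr \<alpha> (u s) (v s) p (v' s)) (u' s))
           has_real_derivative deriv (\<lambda>x. lagr \<alpha> x (v t) (u' t) (v' t)) (u t))
          (at t within {a..b})
      \<and> ((\<lambda>s. deriv (\<lambda>q. lagr \<alpha> (u s) (v s) (u' s) q) (v' s))
           has_real_derivative deriv (\<lambda>y. lagr \<alpha> (u t) y (u' t) (v' t)) (v t))
          (at t within {a..b}))"

end

theory Submission
  imports Defs
begin

lemma uniq:
  fixes a b t :: real
  assumes "a < b" "t \<in> {a..b}" "(f has_real_derivative D) (at t within {a..b})"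
    "(f has_real_derivative E) (at t within {a..b})"
  shows "D = E"
  using vector_derivative_unique_within_closed_interval[of a b t f D E] assms
  by (simp add: has_real_derivative_iff_has_vector_derivative)

lemma lsp_pos_inner: "lspeed x p q > 0 \<Longrightarrow> p\<^sup>2 + (sinh x)\<^sup>2 * q\<^sup>2 > 0"
  unfolding lspeed_def by (metis real_sqrt_gt_0_iff sum_power2_ge_zero
      zero_le_mult_iff zero_le_power2 add_nonneg_nonneg order_less_le real_sqrt_zero)

lemma lsp_sq: "(lspeed x p q)\<^sup>2 = p\<^sup>2 + (sinh x)\<^sup>2 * q\<^sup>2"
  unfolding lspeed_def by simp

lemma d_p: assumes "lspeed x p q > 0"
  shows "deriv (\<lambda>p. lagr \<alpha> x y p q) p = x powr \<alpha> * p / lspeed x p q"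
proof -
  have i: "p\<^sup>2 + (sinh x)\<^sup>2 * q\<^sup>2 > 0" using lsp_pos_inner[OF assms] .
  have "((\<lambda>p. lagr \<alpha> x y p q) has_real_derivative x powr \<alpha> * p / lspeed x p q) (at p)"
    unfolding lagr_def lspeed_def
    using i by (auto intro!: derivative_eq_intros simp: field_simps)
  then show ?thesis by (rule DERIV_imp_deriv)
qed

lemma d_q: assumes "lspeed x p q > 0"
  shows "deriv (\<lambda>q. lagr \<alpha> x y p q) q = x powr \<alpha> * (sinh x)\<^sup>2 * q / lspeed x p q"
proof -
  have i: "p\<^sup>2 + (sinh x)\<^sup>2 * q\<^sup>2 > 0" using lsp_pos_inner[OF assms] .
  have "((\<lambda>q. lagr \<alpha> x y p q) has_real_derivative x powr \<alpha> * (sinh x)\<^sup>2 * q / lspeed x p q) (at q)"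
    unfolding lagr_def lspeed_def
    using i by (auto intro!: derivative_eq_intros simp: field_simps)
  then show ?thesis by (rule DERIV_imp_deriv)
qed

lemma d_y: "deriv (\<lambda>y. lagr \<alpha> x y p q) y = 0"
  unfolding lagr_def by simp

lemma d_x: assumes "lspeed x p q > 0" "x > 0"
  shows "deriv (\<lambda>x. lagr \<alpha> x y p q) x
     = \<alpha> * x powr \<alpha> / x * lspeed x p q + x powr \<alpha> * sinh x * cosh x * q\<^sup>2 / lspeed x p q"
proof -
  have i: "p\<^sup>2 + (sinh x)\<^sup>2 * q\<^sup>2 > 0" using lsp_pos_inner[OF assms(1)] .
  have "((\<lambda>x. lagr \<alpha> x y p q) has_real_derivative
     \<alpha> * x powr \<alpha> / x * lspeed x p q + x powr \<alpha> * sinh x * cosh x * q\<^sup>2 / lspeed x p q) (at x)"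
    unfolding lagr_def lspeed_def
    using i assms(2) by (auto intro!: derivative_eq_intros simp: field_simps powr_diff)
  then show ?thesis by (rule DERIV_imp_deriv)
qed

lemma d_lsp:
  assumes "(u has_real_derivative p) (at t within S)" "(u' has_real_derivative pp) (at t within S)"
    "(v' has_real_derivative qq) (at t within S)" "lspeed (u t) (u' t) (v' t) > 0"
  shows "((\<lambda>s. lspeed (u s) (u' s) (v' s)) has_real_derivative
     (u' t * pp + sinh (u t) * cosh (u t) * p * (v' t)\<^sup>2 + (sinh (u t))\<^sup>2 * v' t * qq) / lspeed (u t) (u' t) (v' t))
     (at t within S)"
proof -
  have i: "(u' t)\<^sup>2 + (sinh (u t))\<^sup>2 * (v' t)\<^sup>2 > 0" using lsp_pos_inner[OF assms(4)] .
  show ?thesis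
    unfolding lspeed_def
    using i assms(1-3) by (auto intro!: derivative_eq_intros simp: field_simps)
qed

lemma d_pow:
  assumes "(u has_real_derivative p) (at t within S)" "u t > 0"
  shows "((\<lambda>s. u s powr \<alpha>) has_real_derivative \<alpha> * u t powr \<alpha> / u t * p) (at t within S)"
  using assms by (auto intro!: derivative_eq_intros simp: field_simps powr_diff)

lemma alg1:
  fixes w P A s c p pp q qq K N :: real
  assumes w: "w > 0" and ww: "w^2 = p^2 + s^2 * q^2"
    and K: "K = p * pp + s * c * p * q^2 + s^2 * q * qq"
    and N: "N = q * c * (2 * p^2 + q^2 * s^2) + s * (p * qq - pp * q)"
  shows "((A * p * p + pp * P) * w - P * p * (K / w)) / (w * w) - (A * w + P * s * c * q^2 / w)
        = - (s * q * (A * s * q * w^2 + P * N)) / w^3"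
proof -
  have "w^3 = w * w * w" by algebra
  then have t: "(((A * p * p + pp * P) * w - P * p * (K / w)) / (w * w) - (A * w + P * s * c * q^2 / w)) * w^3
        = (A * p * p + P * pp) * w^2 - P * p * K - A * w^2 * w^2 - P * s * c * q^2 * w^2"
    using w by (simp add: field_simps power2_eq_square)
  have "(A * p * p + P * pp) * w^2 - P * p * K - A * w^2 * w^2 - P * s * c * q^2 * w^2
      = - (s * q * (A * s * q * w^2 + P * N))"
    unfolding ww K N by (simp add: algebra_simps power2_eq_square)
  with t have "(((A * p * p + pp * P) * w - P * p * (K / w)) / (w * w) - (A * w + P * s * c * q^2 / w)) * w^3
      = - (s * q * (A * s * q * w^2 + P * N))" by simp
  then show ?thesis using w by (simp add: field_simps)
qed
lemma alg2:
  fixes w P A s c p pp q qq K N :: real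
  assumes w: "w > 0" and ww: "w^2 = p^2 + s^2 * q^2"
    and K: "K = p * pp + s * c * p * q^2 + s^2 * q * qq"
    and N: "N = q * c * (2 * p^2 + q^2 * s^2) + s * (p * qq - pp * q)"
  shows "((A * p * (s^2 * q) + (2 * s * c * p * q + s^2 * qq) * P) * w - P * (s^2 * q) * (K / w)) / (w * w)
        = (s * p * (A * s * q * w^2 + P * N)) / w^3"
proof -
  have "w^3 = w * w * w" by algebra
  then have t: "(((A * p * (s^2 * q) + (2 * s * c * p * q + s^2 * qq) * P) * w - P * (s^2 * q) * (K / w)) / (w * w)) * w^3
        = (A * p * (s^2 * q) + (2 * s * c * p * q + s^2 * qq) * P) * w^2 - P * (s^2 * q) * K"
    using w by (simp add: field_simps power2_eq_square)
  have "(A * p * (s^2 * q) + (2 * s * c * p * q + s^2 * qq) * P) * w^2 - P * (s^2 * q) * K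
      = (s * p * (A * s * q * w^2 + P * N))"
    unfolding ww K N by (simp add: algebra_simps power2_eq_square)
  with t have "(((A * p * (s^2 * q) + (2 * s * c * p * q + s^2 * qq) * P) * w - P * (s^2 * q) * (K / w)) / (w * w)) * w^3
      = (s * p * (A * s * q * w^2 + P * N))" by simp
  then show ?thesis using w by (simp add: field_simps)
qed
theorem proposition2p1:
  fixes \<alpha> a b :: real and u v u' v' u'' v'' :: "real \<Rightarrow> real"
  assumes "\<alpha> \<noteq> 0" and "a < b"
    and "\<And>t. t \<in> {a..b} \<Longrightarrow> (u has_real_derivative u' t) (at t within {a..b})"
    and "\<And>t. t \<in> {a..b} \<Longrightarrow> (v has_real_derivative v' t) (at t within {a..b})"
    and "\<And>t. t \<in> {a..b} \<Longrightarrow> (u' has_real_derivative u'' t) (at t within {a..b})"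
    and "\<And>t. t \<in> {a..b} \<Longrightarrow> (v' has_real_derivative v'' t) (at t within {a..b})"
    and "continuous_on {a..b} u''" and "continuous_on {a..b} v''"
    and "\<And>t. t \<in> {a..b} \<Longrightarrow> u t > 0"
    and "\<And>t. t \<in> {a..b} \<Longrightarrow> lspeed (u t) (u' t) (v' t) > 0"
  shows "alpha_stationary \<alpha> u v u' v' a b \<longleftrightarrow>
    (\<forall>t\<in>{a..b}. hcurv (u t) (u' t) (u'' t) (v' t) (v'' t)
        = - \<alpha> * (v' t * sinh (u t)) / (u t * lspeed (u t) (u' t) (v' t)))"
proof -
  note du = assms(3) and dup = assms(5) and dvp = assms(6)
  note upos = assms(9) and lpos = assms(10)
  define I where "I = {a..b}"
  have key: "((\<lambda>s. deriv (\<lambda>p. lagr \<alpha> (u s) (v s) p (v' s)) (u' s))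
           has_real_derivative deriv (\<lambda>x. lagr \<alpha> x (v t) (u' t) (v' t)) (u t)) (at t within {a..b})
      \<and> ((\<lambda>s. deriv (\<lambda>q. lagr \<alpha> (u s) (v s) (u' s) q) (v' s))
           has_real_derivative deriv (\<lambda>y. lagr \<alpha> (u t) y (u' t) (v' t)) (v t)) (at t within {a..b})
      \<longleftrightarrow> hcurv (u t) (u' t) (u'' t) (v' t) (v'' t)
        = - \<alpha> * (v' t * sinh (u t)) / (u t * lspeed (u t) (u' t) (v' t))"
    if t: "t \<in> {a..b}" for t
  proof -
    define x where "x = u t"
    define p where "p = u' t"
    define pp where "pp = u'' t"
    define q where "q = v' t"
    define qq where "qq = v'' t"
    define s where "s = sinh x"
    define c where "c = cosh x"
    define w where "w = lspeed x p q"
    define P where "P = x powr \<alpha>"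
    define A where "A = \<alpha> * P / x"
    define K where "K = p * pp + s * c * p * q^2 + s^2 * q * qq"
    define N where "N = q * c * (2 * p^2 + q^2 * s^2) + s * (p * qq - pp * q)"
    define X where "X = A * s * q * w^2 + P * N"
    have xpos: "x > 0" using upos[OF t] by (simp add: x_def)
    have wpos: "w > 0" using lpos[OF t] by (simp add: w_def x_def p_def q_def)
    have Ppos: "P > 0" using xpos by (simp add: P_def)
    have spos: "s > 0" using xpos by (simp add: s_def)
    have ww: "w^2 = p^2 + s^2 * q^2" by (simp add: w_def lsp_sq s_def)
    have pq: "p \<noteq> 0 \<or> q \<noteq> 0"
    proof (rule ccontr)
      assume "\<not> (p \<noteq> 0 \<or> q \<noteq> 0)"
      then have "w^2 = 0" using ww by simp
      with wpos show False by simp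
    qed
    have dP: "((\<lambda>s. u s powr \<alpha>) has_real_derivative A * p) (at t within {a..b})"
      using d_pow[OF du[OF t] upos[OF t], of \<alpha>] by (simp add: A_def P_def x_def p_def)
    have dL: "((\<lambda>s. lspeed (u s) (u' s) (v' s)) has_real_derivative K / w) (at t within {a..b})"
      using d_lsp[OF du[OF t] dup[OF t] dvp[OF t] lpos[OF t]]
      by (simp add: K_def w_def x_def p_def q_def pp_def qq_def s_def c_def)
    have dS: "((\<lambda>s. (sinh (u s))^2 * v' s) has_real_derivative 2 * s * c * p * q + s^2 * qq) (at t within {a..b})"
      using du[OF t] dvp[OF t]
      by (auto intro!: derivative_eq_intros simp: s_def c_def x_def p_def q_def qq_def algebra_simps)
    have D1: "((\<lambda>s. u s powr \<alpha> * u' s / lspeed (u s) (u' s) (v' s)) has_real_derivative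
       ((A * p * p + pp * P) * w - P * p * (K / w)) / (w * w)) (at t within {a..b})"
      using DERIV_divide[OF DERIV_mult[OF dP dup[OF t]] dL] wpos
      by (simp add: P_def x_def p_def pp_def w_def q_def)
    have D2: "((\<lambda>s. u s powr \<alpha> * ((sinh (u s))^2 * v' s) / lspeed (u s) (u' s) (v' s)) has_real_derivative
       ((A * p * (s^2 * q) + (2 * s * c * p * q + s^2 * qq) * P) * w - P * (s^2 * q) * (K / w)) / (w * w)) (at t within {a..b})"
      using DERIV_divide[OF DERIV_mult[OF dP dS] dL] wpos
      by (simp add: P_def x_def p_def pp_def w_def q_def s_def)
    have e1: "((\<lambda>s. deriv (\<lambda>p. lagr \<alpha> (u s) (v s) p (v' s)) (u' s)) has_real_derivative L) (at t within {a..b})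
       \<longleftrightarrow> L = ((A * p * p + pp * P) * w - P * p * (K / w)) / (w * w)" for L
    proof
      assume h: "((\<lambda>s. deriv (\<lambda>p. lagr \<alpha> (u s) (v s) p (v' s)) (u' s)) has_real_derivative L) (at t within {a..b})"
      have "((\<lambda>s. u s powr \<alpha> * u' s / lspeed (u s) (u' s) (v' s)) has_real_derivative L) (at t within {a..b})"
        by (rule has_field_derivative_transform_within[OF h zero_less_one t]) (simp add: d_p lpos)
      then show "L = ((A * p * p + pp * P) * w - P * p * (K / w)) / (w * w)"
        using uniq[OF assms(2) t _ D1] by blast
    next
      assume h: "L = ((A * p * p + pp * P) * w - P * p * (K / w)) / (w * w)"
      show "((\<lambda>s. deriv (\<lambda>p. lagr \<alpha> (u s) (v s) p (v' s)) (u' s)) has_real_derivative L) (at t within {a..b})"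
        unfolding h
        by (rule has_field_derivative_transform_within[OF D1 zero_less_one t]) (simp add: d_p lpos)
    qed
    have e2: "((\<lambda>s. deriv (\<lambda>q. lagr \<alpha> (u s) (v s) (u' s) q) (v' s)) has_real_derivative L) (at t within {a..b})
       \<longleftrightarrow> L = ((A * p * (s^2 * q) + (2 * s * c * p * q + s^2 * qq) * P) * w - P * (s^2 * q) * (K / w)) / (w * w)" for L
    proof
      assume h: "((\<lambda>s. deriv (\<lambda>q. lagr \<alpha> (u s) (v s) (u' s) q) (v' s)) has_real_derivative L) (at t within {a..b})"
      have "((\<lambda>s. u s powr \<alpha> * ((sinh (u s))^2 * v' s) / lspeed (u s) (u' s) (v' s)) has_real_derivative L) (at t within {a..b})"
        by (rule has_field_derivative_transform_within[OF h zero_less_one t]) (simp add: d_q lpos mult.assoc)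
      then show "L = ((A * p * (s^2 * q) + (2 * s * c * p * q + s^2 * qq) * P) * w - P * (s^2 * q) * (K / w)) / (w * w)"
        using uniq[OF assms(2) t _ D2] by blast
    next
      assume h: "L = ((A * p * (s^2 * q) + (2 * s * c * p * q + s^2 * qq) * P) * w - P * (s^2 * q) * (K / w)) / (w * w)"
      show "((\<lambda>s. deriv (\<lambda>q. lagr \<alpha> (u s) (v s) (u' s) q) (v' s)) has_real_derivative L) (at t within {a..b})"
        unfolding h
        by (rule has_field_derivative_transform_within[OF D2 zero_less_one t]) (simp add: d_q lpos mult.assoc)
    qed
    have Lu: "deriv (\<lambda>x. lagr \<alpha> x (v t) (u' t) (v' t)) (u t) = A * w + P * s * c * q^2 / w"
      using d_x[OF lpos[OF t] upos[OF t]]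
      by (simp add: A_def P_def x_def w_def p_def q_def s_def c_def)
    note a1 = alg1[OF wpos ww K_def N_def, of A P]
    note a2 = alg2[OF wpos ww K_def N_def, of A P]
    have w3: "w^3 > 0" using wpos by simp
    have E1: "((A * p * p + pp * P) * w - P * p * (K / w)) / (w * w) = A * w + P * s * c * q^2 / w
        \<longleftrightarrow> q * X = 0"
    proof -
      have "((A * p * p + pp * P) * w - P * p * (K / w)) / (w * w) = A * w + P * s * c * q^2 / w
        \<longleftrightarrow> - (s * q * X) / w^3 = 0"
        using a1 unfolding X_def by linarith
      also have "\<dots> \<longleftrightarrow> q * X = 0" using w3 spos by simp
      finally show ?thesis .
    qed
    have E2: "((A * p * (s^2 * q) + (2 * s * c * p * q + s^2 * qq) * P) * w - P * (s^2 * q) * (K / w)) / (w * w) = 0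
        \<longleftrightarrow> p * X = 0"
      using a2 w3 spos unfolding X_def by simp
    have XX: "X = 0 \<longleftrightarrow> hcurv (u t) (u' t) (u'' t) (v' t) (v'' t)
        = - \<alpha> * (v' t * sinh (u t)) / (u t * lspeed (u t) (u' t) (v' t))"
    proof -
      have h: "hcurv (u t) (u' t) (u'' t) (v' t) (v'' t) = N / w^3"
        unfolding hcurv_def N_def w_def x_def p_def q_def pp_def qq_def s_def c_def by simp
      have r: "- \<alpha> * (v' t * sinh (u t)) / (u t * lspeed (u t) (u' t) (v' t)) = - \<alpha> * (q * s) / (x * w)"
        by (simp add: x_def q_def s_def w_def p_def)
      have "X = P / x * (\<alpha> * s * q * w^2 + N * x)"
        unfolding X_def A_def using xpos by (simp add: field_simps)
      then have "X = 0 \<longleftrightarrow> \<alpha> * s * q * w^2 + N * x = 0" using Ppos xpos by simp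
      also have "\<dots> \<longleftrightarrow> N / w^3 = - \<alpha> * (q * s) / (x * w)"
        using xpos wpos by (simp add: field_simps power2_eq_square power3_eq_cube, linarith)
      finally show ?thesis using h r by simp
    qed
    show ?thesis
    proof -
      have "?thesis \<longleftrightarrow> (q * X = 0 \<and> p * X = 0) = (X = 0)"
        unfolding e1 e2 Lu d_y XX[symmetric] using E1 E2 by (metis (no_types, lifting))
      moreover have "(q * X = 0 \<and> p * X = 0) = (X = 0)" using pq by auto
      ultimately show ?thesis by blast
    qed
  qed
  show ?thesis unfolding alpha_stationary_def using key by blast
qed

end
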